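(* Let $G$ be a countably infinite graph and let $h:\mathbb{N}\to\mathbb{N}$. Then $h$ is online computable from the isomorphism type of $G$ if and only if $h$ is primitive recursive.
   Context: A presentation of $G$ is a graph with vertex set $\mathbb{N}$ isomorphic to $G$. For a presentation $\alpha$ and $m\in\mathbb{N}$, let $\alpha\upharpoonright m$ denote the finite string coding the induced subgraph of $\alpha$ on the vertices $\{0,\dots,m-1\}$ (listing, for each vertex, its adjacencies with the earlier vertices). A function $h:\mathbb{N}\to\mathbb{N}$ is online computable from the isomorphism type of $G$ if there are primitive recursive functions $u:\mathbb{N}\to\mathbb{N}$ (the use) and $F$ such that for every presentation $\alpha$ of $G$ and every $i$, $h(i)=F(\alpha\upharpoonright u(i), i)$. (Equivalently, $h$ is computed from every presentation $\alpha$ by a single primitive recursive functional with oracle $\alpha$; by the robustness lemma such a functional has a primitive recursive use, since the space of presentations is primitively recursively branching.) *)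

theory Defs
  imports Main "HOL-Library.Countable_Set"
begin

primrec prim_rec_op ::
  "(nat list \<Rightarrow> nat) \<Rightarrow> (nat list \<Rightarrow> nat) \<Rightarrow> nat \<Rightarrow> nat list \<Rightarrow> nat" where
  "prim_rec_op g h 0 ys = g ys"
| "prim_rec_op g h (Suc x) ys = h (x # prim_rec_op g h x ys # ys)"

text \<open>PR n f: f, restricted to argument lists of length n, is primitive recursive.\<close>
inductive PR :: "nat \<Rightarrow> (nat list \<Rightarrow> nat) \<Rightarrow> bool" where
  PR_zero: "PR n (\<lambda>xs. 0)"
| PR_succ: "PR 1 (\<lambda>xs. Suc (hd xs))"
| PR_proj: "i < n \<Longrightarrow> PR n (\<lambda>xs. xs ! i)"
| PR_comp: "PR m g \<Longrightarrow> length gs = m \<Longrightarrow> (\<forall>f \<in> set gs. PR n f)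
            \<Longrightarrow> PR n (\<lambda>xs. g (map (\<lambda>f. f xs) gs))"
| PR_rec: "PR n g \<Longrightarrow> PR (Suc (Suc n)) h
            \<Longrightarrow> PR (Suc n) (\<lambda>xs. prim_rec_op g h (hd xs) (tl xs))"

definition prim_rec1 :: "(nat \<Rightarrow> nat) \<Rightarrow> bool" where
  "prim_rec1 h \<longleftrightarrow> (\<exists>f. PR 1 f \<and> (\<forall>x. h x = f [x]))"

definition prim_rec2 :: "(nat \<Rightarrow> nat \<Rightarrow> nat) \<Rightarrow> bool" where
  "prim_rec2 F \<longleftrightarrow> (\<exists>f. PR 2 f \<and> (\<forall>x y. F x y = f [x, y]))"

definition is_graph :: "'a set \<Rightarrow> ('a \<Rightarrow> 'a \<Rightarrow> bool) \<Rightarrow> bool" where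
  "is_graph V E \<longleftrightarrow> (\<forall>x\<in>V. \<forall>y\<in>V. E x y \<longleftrightarrow> E y x) \<and> (\<forall>x\<in>V. \<not> E x x)"

definition presentation :: "(nat \<Rightarrow> nat \<Rightarrow> bool) \<Rightarrow> 'a set \<Rightarrow> ('a \<Rightarrow> 'a \<Rightarrow> bool) \<Rightarrow> bool" where
  "presentation \<alpha> V E \<longleftrightarrow> is_graph UNIV \<alpha> \<and>
     (\<exists>f. bij_betw f UNIV V \<and> (\<forall>i j. \<alpha> i j \<longleftrightarrow> E (f i) (f j)))"

definition restr_string :: "(nat \<Rightarrow> nat \<Rightarrow> bool) \<Rightarrow> nat \<Rightarrow> bool list" where
  "restr_string \<alpha> m = concat (map (\<lambda>i. map (\<lambda>j. \<alpha> i j) [0..<i]) [0..<m])"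

text \<open>Standard injective coding of binary strings as natural numbers (binary with a
  leading 1 marker).\<close>
definition code_string :: "bool list \<Rightarrow> nat" where
  "code_string bs = foldr (\<lambda>b n. 2 * n + (if b then 1 else 0)) bs 1"

definition online_computable ::
  "'a set \<Rightarrow> ('a \<Rightarrow> 'a \<Rightarrow> bool) \<Rightarrow> (nat \<Rightarrow> nat) \<Rightarrow> bool" where
  "online_computable V E h \<longleftrightarrow>
     (\<exists>u F. prim_rec1 u \<and> prim_rec2 F \<and>
        (\<forall>\<alpha>. presentation \<alpha> V E \<longrightarrow>
           (\<forall>i. h i = F (code_string (restr_string \<alpha> (u i))) i)))"

end

theory Submission
  imports Defs "HOL-Library.Ramsey"
begin

lemma comp1: "PR 1 g \<Longrightarrow> PR n f \<Longrightarrow> PR n (\<lambda>xs. g [f xs])"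
  using PR_comp[of 1 g "[f]" n] by simp

lemma comp2: "PR 2 g \<Longrightarrow> PR n f1 \<Longrightarrow> PR n f2 \<Longrightarrow> PR n (\<lambda>xs. g [f1 xs, f2 xs])"
  using PR_comp[of 2 g "[f1,f2]" n] by (simp add: numeral_2_eq_2)

lemma PR_const: "PR n (\<lambda>_. c)"
proof (induction c)
  case 0
  then show ?case by (rule PR_zero)
next
  case (Suc c)
  have "PR n (\<lambda>xs. Suc (hd [(\<lambda>_. c) xs]))" by (rule comp1[OF PR_succ Suc])
  then show ?case by simp
qed

lemma pr1_const: "prim_rec1 (\<lambda>_. c)"
  unfolding prim_rec1_def using PR_const by blast

lemma pr1_id: "prim_rec1 (\<lambda>x. x)"
  unfolding prim_rec1_def using PR_proj[of 0 1] by force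

lemma pr1_comp: "prim_rec1 f \<Longrightarrow> prim_rec1 g \<Longrightarrow> prim_rec1 (\<lambda>x. f (g x))"
  proof -
  assume "prim_rec1 f" "prim_rec1 g"
  then obtain F G where "PR 1 F" "\<forall>x. f x = F [x]" "PR 1 G" "\<forall>x. g x = G [x]"
    unfolding prim_rec1_def by blast
  then show ?thesis unfolding prim_rec1_def
    by (intro exI[of _ "\<lambda>xs. F [G xs]"]) (simp add: comp1)
qed

lemma pr2_comp1: "prim_rec2 G \<Longrightarrow> prim_rec1 a \<Longrightarrow> prim_rec1 b \<Longrightarrow> prim_rec1 (\<lambda>x. G (a x) (b x))"
proof -
  assume "prim_rec2 G" "prim_rec1 a" "prim_rec1 b"
  then obtain g fa fb where "PR 2 g" "\<forall>x y. G x y = g [x,y]" "PR 1 fa" "\<forall>x. a x = fa [x]"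
    "PR 1 fb" "\<forall>x. b x = fb [x]" unfolding prim_rec1_def prim_rec2_def by blast
  then show ?thesis unfolding prim_rec1_def
    by (intro exI[of _ "\<lambda>xs. g [fa xs, fb xs]"]) (simp add: comp2)
qed

lemma pr2_comp2: "prim_rec2 G \<Longrightarrow> prim_rec2 a \<Longrightarrow> prim_rec2 b \<Longrightarrow> prim_rec2 (\<lambda>x y. G (a x y) (b x y))"
proof -
  assume "prim_rec2 G" "prim_rec2 a" "prim_rec2 b"
  then obtain g fa fb where "PR 2 g" "\<forall>x y. G x y = g [x,y]" "PR 2 fa" "\<forall>x y. a x y = fa [x,y]"
    "PR 2 fb" "\<forall>x y. b x y = fb [x,y]" unfolding prim_rec2_def by blast
  then show ?thesis unfolding prim_rec2_def
    by (intro exI[of _ "\<lambda>xs. g [fa xs, fb xs]"]) (simp add: comp2)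
qed

lemma pr2_fst: "prim_rec2 (\<lambda>x y. x)"
  unfolding prim_rec2_def using PR_proj[of 0 2] by force

lemma pr2_snd: "prim_rec2 (\<lambda>x y. y)"
  unfolding prim_rec2_def using PR_proj[of 1 2] by force

lemma pr2_const: "prim_rec2 (\<lambda>x y. c)"
  unfolding prim_rec2_def using PR_const by blast

lemma pr2_of1: "prim_rec1 h \<Longrightarrow> prim_rec2 (\<lambda>x y. h y)"
proof -
  assume "prim_rec1 h"
  then obtain f where f: "PR 1 f" "\<forall>x. h x = f [x]" unfolding prim_rec1_def by blast
  have "PR 2 (\<lambda>xs. f [xs ! 1])" by (rule comp1[OF f(1) PR_proj]) simp
  then show ?thesis unfolding prim_rec2_def using f(2) by (intro exI[of _ "\<lambda>xs. f [xs ! 1]"]) simp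
qed

lemma pr2_add: "prim_rec2 (\<lambda>x y. x + y)"
proof -
  have g: "PR (Suc 0) (\<lambda>xs. xs ! 0)" using PR_proj[of 0 1] by simp
  have h: "PR 3 (\<lambda>xs. Suc (hd [xs ! 1]))" by (rule comp1[OF PR_succ PR_proj]) simp
  have "PR (Suc (Suc (Suc 0))) (\<lambda>xs. Suc (hd [xs ! 1]))" using h by (simp add: numeral_3_eq_3)
  from PR_rec[OF g this] have p: "PR 2 (\<lambda>xs. prim_rec_op (\<lambda>xs. xs ! 0) (\<lambda>xs. Suc (hd [xs ! 1])) (hd xs) (tl xs))"
    by (simp add: numeral_2_eq_2)
  have "prim_rec_op (\<lambda>xs. xs ! 0) (\<lambda>xs. Suc (hd [xs ! 1])) x [y] = x + y" for x y
    by (induction x) auto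
  then show ?thesis unfolding prim_rec2_def using p
    by (intro exI[of _ "\<lambda>xs. prim_rec_op (\<lambda>xs. xs ! 0) (\<lambda>xs. Suc (hd [xs ! 1])) (hd xs) (tl xs)"]) simp
qed

lemma rec1:
  assumes "prim_rec2 H" "\<And>x. f (Suc x) = H x (f x)"
  shows "prim_rec1 f"
proof -
  obtain g where g: "PR 2 g" "\<forall>x y. H x y = g [x,y]" using assms(1) unfolding prim_rec2_def by blast
  have g': "PR (Suc (Suc 0)) g" using g(1) by (simp add: numeral_2_eq_2)
  define c where "c = f 0"
  from PR_rec[OF PR_const g'] have p: "PR 1 (\<lambda>xs. prim_rec_op (\<lambda>_. c) g (hd xs) (tl xs))" by simp
  have "f x = prim_rec_op (\<lambda>_. c) g x []" for x
    by (induction x) (simp_all add: assms(2) g(2) c_def)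
  then show ?thesis unfolding prim_rec1_def using p
    by (intro exI[of _ "\<lambda>xs. prim_rec_op (\<lambda>_. c) g (hd xs) (tl xs)"]) simp
qed

lemma restr_const: "restr_string (\<lambda>_ _. b) m = replicate (\<Sum>i<m. i) b"
  by (induction m) (simp_all add: restr_string_def replicate_add map_replicate_const)

lemma pr_T: "prim_rec1 (\<lambda>m. \<Sum>i<m. i)"
  by (rule rec1[OF pr2_comp2[OF pr2_add pr2_snd pr2_fst]]) simp

lemma pr_C: "prim_rec1 (\<lambda>n. code_string (replicate n b))"
  by (rule rec1[OF pr2_comp2[OF pr2_add pr2_comp2[OF pr2_add pr2_snd pr2_snd] pr2_const,
        of "if b then 1 else 0"]]) (simp add: code_string_def)

lemma key:
  fixes V :: "'a set" and E :: "'a \<Rightarrow> 'a \<Rightarrow> bool"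
  assumes G: "is_graph V E" and cV: "countable V" and iV: "infinite V"
  shows "\<exists>b. \<forall>m. \<exists>\<alpha>. presentation \<alpha> V E \<and> restr_string \<alpha> m = restr_string (\<lambda>_ _. b) m"
proof -
  define col where "col X = (if \<exists>x y. X = {x,y} \<and> E x y then 1 else 0::nat)" for X
  obtain Y t where Y: "Y \<subseteq> V" "infinite Y" "t < 2"
    and Yc: "\<forall>x\<in>Y. \<forall>y\<in>Y. x \<noteq> y \<longrightarrow> col {x, y} = t"
  proof -
    have "\<forall>x\<in>V. \<forall>y\<in>V. x \<noteq> y \<longrightarrow> col {x, y} < 2" by (simp add: col_def)
    from Ramsey2[OF iV this] show ?thesis using that by blast
  qed
  have sym: "\<And>x y. x \<in> V \<Longrightarrow> y \<in> V \<Longrightarrow> E x y \<longleftrightarrow> E y x" using G by (auto simp: is_graph_def)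
  have hom: "E x y \<longleftrightarrow> t = 1" if "x \<in> Y" "y \<in> Y" "x \<noteq> y" for x y
  proof -
    have c: "col {x,y} = t" using Yc that by blast
    have xy: "x \<in> V" "y \<in> V" using that Y(1) by auto
    show ?thesis
    proof
      assume "E x y" then have "\<exists>xa ya. {x, y} = {xa, ya} \<and> E xa ya" by blast
      then have "col {x,y} = 1" unfolding col_def by simp
      then show "t = 1" using c by simp
    next
      assume "t = 1"
      then have "col {x,y} = 1" using c by simp
      then obtain x' y' where "{x,y} = {x',y'}" "E x' y'" unfolding col_def by (auto split: if_splits)
      then show "E x y" using sym xy by (auto simp: doubleton_eq_iff)
    qed
  qed
  have cY: "countable Y" using countable_subset[OF Y(1) cV] .
  define e where "e = from_nat_into Y"
  have be: "bij_betw e UNIV Y" unfolding e_def by (rule bij_betw_from_nat_into[OF cY Y(2)])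
  show ?thesis
  proof (intro exI allI)
    fix m
    define R where "R = V - e ` {..<m}"
    have iR: "infinite R" unfolding R_def using iV by (simp add: Diff_infinite_finite)
    have cR: "countable R" unfolding R_def using cV by simp
    define g where "g = from_nat_into R"
    have bg: "bij_betw g UNIV R" unfolding g_def by (rule bij_betw_from_nat_into[OF cR iR])
    define f where "f k = (if k < m then e k else g (k - m))" for k
    have eY: "e k \<in> Y" for k using be by (auto simp: bij_betw_def)
    have gR: "g k \<in> R" for k using bg by (auto simp: bij_betw_def)
    have ei: "inj e" using be by (auto simp: bij_betw_def)
    have gi: "inj g" using bg by (auto simp: bij_betw_def)
    have fV: "f k \<in> V" for k using eY gR Y(1) by (auto simp: f_def R_def)
    have "inj f"
    proof (rule injI)
      fix k l assume "f k = f l"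
      moreover have "e a \<noteq> g c \<and> g c \<noteq> e a" if "a < m" for a c
        using gR[of c] that unfolding R_def by (metis DiffD2 imageI lessThan_iff)
      ultimately show "k = l" using ei gi
        unfolding f_def by (auto split: if_splits dest: injD)
    qed
    moreover have "V \<subseteq> range f"
    proof
      fix v assume v: "v \<in> V"
      show "v \<in> range f"
      proof (cases "v \<in> e ` {..<m}")
        case True then show ?thesis by (auto simp: f_def image_iff)
      next
        case False
        then have "v \<in> R" using v by (simp add: R_def)
        then obtain j where "v = g j" using bg by (auto simp: bij_betw_def)
        then have "f (j + m) = v" by (simp add: f_def)
        then show ?thesis by (metis rangeI)
      qed
    qed
    ultimately have bf: "bij_betw f UNIV V" using fV by (auto simp: bij_betw_def)
    define \<alpha> where "\<alpha> i j = E (f i) (f j)" for i j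
    have "is_graph UNIV \<alpha>" using G fV unfolding is_graph_def \<alpha>_def by auto
    then have "presentation \<alpha> V E" unfolding presentation_def using bf \<alpha>_def by blast
    moreover have "restr_string \<alpha> m = restr_string (\<lambda>_ _. t = 1) m"
      unfolding restr_string_def
    proof (intro arg_cong[where f=concat] map_cong refl)
      fix i j assume i: "i \<in> set [0..<m]" and j: "j \<in> set [0..<i]"
      then have "i < m" "j < i" by auto
      then have "f i = e i" "f j = e j" "e i \<noteq> e j" using ei by (auto simp: f_def dest: injD)
      then show "\<alpha> i j = (t = 1)" using hom eY \<alpha>_def by simp
    qed
    ultimately show "presentation \<alpha> V E \<and> restr_string \<alpha> m = restr_string (\<lambda>_ _. t = 1) m" by blast
  qed
qed

theorem mainTheorem2:
  fixes V :: "'a set" and E :: "'a \<Rightarrow> 'a \<Rightarrow> bool" and h :: "nat \<Rightarrow> nat"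
  assumes "is_graph V E" and "countable V" and "infinite V"
  shows "online_computable V E h \<longleftrightarrow> prim_rec1 h"
proof
  assume "online_computable V E h"
  then obtain u F where u: "prim_rec1 u" and F: "prim_rec2 F"
    and H: "\<forall>\<alpha>. presentation \<alpha> V E \<longrightarrow> (\<forall>i. h i = F (code_string (restr_string \<alpha> (u i))) i)"
    unfolding online_computable_def by blast
  obtain b where b: "\<forall>m. \<exists>\<alpha>. presentation \<alpha> V E \<and> restr_string \<alpha> m = restr_string (\<lambda>_ _. b) m"
    using key[OF assms] by blast
  have hi: "h i = F (code_string (replicate (\<Sum>k<u i. k) b)) i" for i
  proof -
    obtain \<alpha> where "presentation \<alpha> V E" "restr_string \<alpha> (u i) = restr_string (\<lambda>_ _. b) (u i)"
      using b by blast
    then show ?thesis using H restr_const by metis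
  qed
  have "prim_rec1 (\<lambda>i. F (code_string (replicate (\<Sum>k<u i. k) b)) i)"
    by (rule pr2_comp1[OF F pr1_comp[OF pr_C pr1_comp[OF pr_T u]] pr1_id])
  moreover have "h = (\<lambda>i. F (code_string (replicate (\<Sum>k<u i. k) b)) i)" by (rule ext) (rule hi)
  ultimately show "prim_rec1 h" by simp
next
  assume "prim_rec1 h"
  then show "online_computable V E h" unfolding online_computable_def
    using pr1_const[of 0] pr2_of1 by blast
qed

end
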